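(* There exist a finite candidate set $C$, a tie-breaking order $>$ on $C$, a preference profile $V$, and for each GS-manipulator $i$ at $V$ under 4-Approval a minimal GS-manipulation $m_i$ of $i$, such that the GS-game in which each GS-manipulator $i$ has action set $A_i=\{v_i,m_i\}$ has no Nash equilibrium in pure strategies.
   Context: Each voter $i$ has a strict linear order $v_i$ over $C$; $\mathrm{top}_k(v)$ is the set of the $k$ highest-ranked candidates of $v$. $k$-Approval: each candidate gets one point from each voter ranking her among his top $k$; the highest score wins, ties broken in favour of the candidate highest in the fixed strict linear order $>$. Write $\mathcal{R}$ for the rule and $(V_{-i},v_i')$ for $V$ with $v_i$ replaced by $v_i'$. A GS-manipulation of voter $i$ at $V$ is a vote $v_i'$ such that $i$ strictly prefers $\mathcal{R}(V_{-i},v_i')$ to $\mathcal{R}(V)$ and for every vote $v_i''$ either $\mathcal{R}(V_{-i},v_i'')=\mathcal{R}(V_{-i},v_i')$ or $i$ strictly prefers $\mathcal{R}(V_{-i},v_i')$ to $\mathcal{R}(V_{-i},v_i'')$; it is in favour of $x=\mathcal{R}(V_{-i},v_i')$; $i$ is a GS-manipulator if he has one. GS-game for $V$: players are all GS-manipulators at $V$; player $i$'s action set contains $v_i$ and some of his GS-manipulations; non-players vote sincerely; players compare action profiles via their preferences over the resulting winners. Pure Nash equilibrium: no player can obtain a strictly preferred winner by switching to another action of his own action set. Let $w=\mathcal{R}(V)$. A GS-manipulation $v_i'$ in favour of $x$ is of Type 1 if $w,x\notin\mathrm{top}_k(v_i)$ and of Type 2 if $w,x\in\mathrm{top}_k(v_i)$.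 A Type 1 GS-manipulation in favour of $x$ is minimal if $\mathrm{top}_k(v_i')$ is obtained from $\mathrm{top}_k(v_i)$ by removing the $k$-th ranked candidate of $v_i$ and adding $x$. A Type 2 GS-manipulation $v_i'$ is minimal if $\ell=|\mathrm{top}_k(v_i)\setminus\mathrm{top}_k(v_i')|$ is the smallest possible among GS-manipulations of $i$ and $\mathrm{top}_k(v_i')\setminus\mathrm{top}_k(v_i)$ consists of the $\ell$ candidates ranked highest by $v_i$ among those outside $\mathrm{top}_k(v_i)$. *)

theory Defs
  imports Main
begin

text \<open>A vote (strict linear order over C) is a list enumerating C from best to worst.
  Voters are 0..<n; a profile is V :: nat => nat list (only entries i < n matter).
  The tie-breaking order is also a list tb enumerating C (earlier = higher).\<close>

definition is_vote :: "nat set \<Rightarrow> nat list \<Rightarrow> bool" where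
  "is_vote C v \<longleftrightarrow> distinct v \<and> set v = C"

definition prefers :: "nat list \<Rightarrow> nat \<Rightarrow> nat \<Rightarrow> bool" where
  "prefers v a b \<longleftrightarrow> (\<exists>i j. i < j \<and> j < length v \<and> v ! i = a \<and> v ! j = b)"

definition topk :: "nat \<Rightarrow> nat list \<Rightarrow> nat set" where
  "topk k v = set (take k v)"

definition score :: "nat \<Rightarrow> nat \<Rightarrow> (nat \<Rightarrow> nat list) \<Rightarrow> nat \<Rightarrow> nat" where
  "score k n V c = card {i. i < n \<and> c \<in> topk k (V i)}"

definition kapp_winner :: "nat \<Rightarrow> nat list \<Rightarrow> nat \<Rightarrow> (nat \<Rightarrow> nat list) \<Rightarrow> nat" where
  "kapp_winner k tb n V =
     hd (filter (\<lambda>c. \<forall>d\<in>set tb. score k n V d \<le> score k n V c) tb)"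

definition GS_manipulation ::
  "nat \<Rightarrow> nat list \<Rightarrow> nat \<Rightarrow> (nat \<Rightarrow> nat list) \<Rightarrow> nat \<Rightarrow> nat list \<Rightarrow> bool" where
  "GS_manipulation k tb n V i v' \<longleftrightarrow>
     i < n \<and> is_vote (set tb) v' \<and>
     prefers (V i) (kapp_winner k tb n (V(i := v'))) (kapp_winner k tb n V) \<and>
     (\<forall>v''. is_vote (set tb) v'' \<longrightarrow>
        kapp_winner k tb n (V(i := v'')) = kapp_winner k tb n (V(i := v')) \<or>
        prefers (V i) (kapp_winner k tb n (V(i := v'))) (kapp_winner k tb n (V(i := v''))))"

definition GS_manipulator :: "nat \<Rightarrow> nat list \<Rightarrow> nat \<Rightarrow> (nat \<Rightarrow> nat list) \<Rightarrow> nat \<Rightarrow> bool" where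
  "GS_manipulator k tb n V i \<longleftrightarrow> (\<exists>v'. GS_manipulation k tb n V i v')"

definition minimal_type1 ::
  "nat \<Rightarrow> nat list \<Rightarrow> nat \<Rightarrow> (nat \<Rightarrow> nat list) \<Rightarrow> nat \<Rightarrow> nat list \<Rightarrow> bool" where
  "minimal_type1 k tb n V i v' \<longleftrightarrow>
     (let w = kapp_winner k tb n V; x = kapp_winner k tb n (V(i := v')) in
      GS_manipulation k tb n V i v' \<and>
      w \<notin> topk k (V i) \<and> x \<notin> topk k (V i) \<and>
      topk k v' = (topk k (V i) - {V i ! (k - 1)}) \<union> {x})"

definition minimal_type2 ::
  "nat \<Rightarrow> nat list \<Rightarrow> nat \<Rightarrow> (nat \<Rightarrow> nat list) \<Rightarrow> nat \<Rightarrow> nat list \<Rightarrow> bool" where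
  "minimal_type2 k tb n V i v' \<longleftrightarrow>
     (let w = kapp_winner k tb n V; x = kapp_winner k tb n (V(i := v'));
          l = card (topk k (V i) - topk k v') in
      GS_manipulation k tb n V i v' \<and>
      w \<in> topk k (V i) \<and> x \<in> topk k (V i) \<and>
      (\<forall>u. GS_manipulation k tb n V i u \<longrightarrow> l \<le> card (topk k (V i) - topk k u)) \<and>
      topk k v' - topk k (V i) = set (take l (drop k (V i))))"

definition minimal_GS_manipulation ::
  "nat \<Rightarrow> nat list \<Rightarrow> nat \<Rightarrow> (nat \<Rightarrow> nat list) \<Rightarrow> nat \<Rightarrow> nat list \<Rightarrow> bool" where
  "minimal_GS_manipulation k tb n V i v' \<longleftrightarrow>
     minimal_type1 k tb n V i v' \<or> minimal_type2 k tb n V i v'"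

definition game_profile ::
  "nat \<Rightarrow> nat list \<Rightarrow> nat \<Rightarrow> (nat \<Rightarrow> nat list) \<Rightarrow> (nat \<Rightarrow> nat list) \<Rightarrow> (nat \<Rightarrow> nat list) \<Rightarrow> bool" where
  "game_profile k tb n V m W \<longleftrightarrow>
     (\<forall>j<n. (GS_manipulator k tb n V j \<longrightarrow> W j \<in> {V j, m j}) \<and>
            (\<not> GS_manipulator k tb n V j \<longrightarrow> W j = V j))"

definition pure_NE ::
  "nat \<Rightarrow> nat list \<Rightarrow> nat \<Rightarrow> (nat \<Rightarrow> nat list) \<Rightarrow> (nat \<Rightarrow> nat list) \<Rightarrow> (nat \<Rightarrow> nat list) \<Rightarrow> bool" where
  "pure_NE k tb n V m W \<longleftrightarrow>
     game_profile k tb n V m W \<and>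
     (\<forall>i<n. GS_manipulator k tb n V i \<longrightarrow>
        (\<forall>a\<in>{V i, m i}.
           \<not> prefers (V i) (kapp_winner k tb n (W(i := a))) (kapp_winner k tb n W)))"

end

theory Submission
  imports Defs
begin

lemma score_list: "score k n V c = length (filter (\<lambda>i. c \<in> topk k (V i)) [0..<n])"
proof -
  have "{i. i < n \<and> c \<in> topk k (V i)} = set (filter (\<lambda>i. c \<in> topk k (V i)) [0..<n])" by auto
  then show ?thesis unfolding score_def by (metis distinct_card distinct_filter distinct_upt)
qed

lemma upt3: "[0..<3] = [0::nat,1,2]" by (simp add: upt_rec)

lemma prefers_Nil: "\<not> prefers [] a b" by (simp add: prefers_def)

lemma prefers_Cons: "prefers (x#xs) a b \<longleftrightarrow> (a = x \<and> b \<in> set xs) \<or> prefers xs a b"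
proof
  assume "prefers (x#xs) a b"
  then obtain i j where ij: "i < j" "j < length (x#xs)" "(x#xs) ! i = a" "(x#xs) ! j = b"
    unfolding prefers_def by blast
  show "(a = x \<and> b \<in> set xs) \<or> prefers xs a b"
  proof (cases i)
    case 0
    then obtain j' where "j = Suc j'" using ij by (cases j) auto
    then show ?thesis using ij 0 by auto
  next
    case (Suc i')
    then obtain j' where "j = Suc j'" using ij by (cases j) auto
    then show ?thesis using ij Suc unfolding prefers_def by auto
  qed
next
  assume "(a = x \<and> b \<in> set xs) \<or> prefers xs a b"
  then show "prefers (x#xs) a b"
  proof
    assume h: "a = x \<and> b \<in> set xs"
    then obtain j where "j < length xs" "xs ! j = b" by (meson in_set_conv_nth)
    then show ?thesis unfolding prefers_def using h
      by (intro exI[of _ 0] exI[of _ "Suc j"]) auto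
  next
    assume "prefers xs a b"
    then obtain i j where "i < j" "j < length xs" "xs ! i = a" "xs ! j = b"
      unfolding prefers_def by blast
    then show ?thesis unfolding prefers_def
      by (intro exI[of _ "Suc i"] exI[of _ "Suc j"]) auto
  qed
qed

lemma winner_max:
  assumes "tb \<noteq> []"
  shows "kapp_winner k tb n V \<in> set tb \<and>
         (\<forall>d\<in>set tb. score k n V d \<le> score k n V (kapp_winner k tb n V))"
proof -
  let ?s = "score k n V"
  have "finite (?s ` set tb)" "?s ` set tb \<noteq> {}" using assms by auto
  then have "Max (?s ` set tb) \<in> ?s ` set tb" by (rule Max_in)
  then obtain c where c: "c \<in> set tb" "?s c = Max (?s ` set tb)" by auto
  have "\<forall>d\<in>set tb. ?s d \<le> ?s c" using c by auto
  then have ne: "filter (\<lambda>c. \<forall>d\<in>set tb. ?s d \<le> ?s c) tb \<noteq> []"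
    using c(1) by (auto simp: filter_empty_conv)
  then have "hd (filter (\<lambda>c. \<forall>d\<in>set tb. ?s d \<le> ?s c) tb)
     \<in> set (filter (\<lambda>c. \<forall>d\<in>set tb. ?s d \<le> ?s c) tb)" by (rule hd_in_set)
  then show ?thesis unfolding kapp_winner_def by auto
qed

definition tb0 :: "nat list" where "tb0 = [0,1,2,3,4,5,6]"
definition vv :: "nat \<Rightarrow> nat list" where
  "vv i = (if i = 0 then [1,0,3,4,2,5,6] else if i = 1 then [1,3,5,4,2,6,0] else [2,4,3,6,0,1,5])"
definition mm :: "nat \<Rightarrow> nat list" where
  "mm i = (if i = 0 then [1,0,2,5,3,4,6] else if i = 1 then [1,5,2,6,3,4,0] else [2,4,6,0,3,1,5])"

lemmas comp = kapp_winner_def score_list upt3 topk_def tb0_def vv_def mm_def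

lemma wV: "kapp_winner 4 tb0 3 vv = 3" by (simp add: comp)
lemma wm0: "kapp_winner 4 tb0 3 (vv(0 := mm 0)) = 1" by (simp add: comp)
lemma wm1: "kapp_winner 4 tb0 3 (vv(1 := mm 1)) = 1" by (simp add: comp)
lemma wm2: "kapp_winner 4 tb0 3 (vv(2 := mm 2)) = 4" by (simp add: comp)

lemma tb0_ne: "tb0 \<noteq> []" by (simp add: tb0_def)

lemma wmax: "kapp_winner 4 tb0 3 W \<in> set tb0 \<and>
         (\<forall>d\<in>set tb0. score 4 3 W d \<le> score 4 3 W (kapp_winner 4 tb0 3 W))"
  using winner_max[OF tb0_ne] .

lemma score_upd:
  "score 4 3 (vv(i := u)) c = length (filter (\<lambda>j. c \<in> topk 4 ((vv(i := u)) j)) [0,1,2])"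
  by (simp add: score_list upt3)

lemma topk_eq_cong:
  assumes "topk k u = topk k (V i)"
  shows "kapp_winner k tb n (V(i := u)) = kapp_winner k tb n V"
proof -
  have "score k n (V(i := u)) = score k n V"
    using assms by (auto simp: score_def intro!: ext arg_cong[where f=card])
  then show ?thesis unfolding kapp_winner_def by simp
qed

lemma vote_topk:
  assumes "is_vote (set tb0) v"
  shows "card (topk 4 v) = 4 \<and> topk 4 v \<subseteq> set tb0"
proof -
  have d: "distinct v" and s: "set v = set tb0" using assms by (auto simp: is_vote_def)
  then have "length v = 7" using distinct_card[OF d] by (simp add: tb0_def)
  moreover have "topk 4 v \<subseteq> set tb0" using s set_take_subset[of 4 v] by (simp add: topk_def)
  ultimately show ?thesis using d by (simp add: topk_def distinct_card)
qed

lemma forall0: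
  assumes "is_vote (set tb0) v"
  shows "kapp_winner 4 tb0 3 (vv(0 := v)) = 1 \<or>
         prefers (vv 0) 1 (kapp_winner 4 tb0 3 (vv(0 := v)))"
proof -
  have "kapp_winner 4 tb0 3 (vv(0 := v)) \<in> set tb0" using wmax by blast
  then show ?thesis by (auto simp: vv_def tb0_def prefers_Cons)
qed

lemma forall1:
  assumes "is_vote (set tb0) v"
  shows "kapp_winner 4 tb0 3 (vv(1 := v)) = 1 \<or>
         prefers (vv 1) 1 (kapp_winner 4 tb0 3 (vv(1 := v)))"
proof -
  have "kapp_winner 4 tb0 3 (vv(1 := v)) \<in> set tb0" using wmax by blast
  then show ?thesis by (auto simp: vv_def tb0_def prefers_Cons)
qed

lemma not2:
  "kapp_winner 4 tb0 3 (vv(2 := v)) \<noteq> 2"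
proof
  assume h: "kapp_winner 4 tb0 3 (vv(2 := v)) = 2"
  have "score 4 3 (vv(2 := v)) 1 \<le> score 4 3 (vv(2 := v)) 2"
    using wmax[of "vv(2 := v)"] h by (simp add: tb0_def)
  then show False by (simp add: score_upd vv_def topk_def split: if_splits)
qed

lemma forall2:
  assumes "is_vote (set tb0) v"
  shows "kapp_winner 4 tb0 3 (vv(2 := v)) = 4 \<or>
         prefers (vv 2) 4 (kapp_winner 4 tb0 3 (vv(2 := v)))"
proof -
  have "kapp_winner 4 tb0 3 (vv(2 := v)) \<in> set tb0" using wmax by blast
  then show ?thesis using not2[of v] by (auto simp: vv_def tb0_def prefers_Cons)
qed


lemma isv: "is_vote (set tb0) (mm i)" "is_vote (set tb0) (vv i)" "is_vote (set tb0) tb0"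
  by (auto simp: is_vote_def mm_def vv_def tb0_def)

lemma GS0: "GS_manipulation 4 tb0 3 vv 0 (mm 0)"
proof -
  have "prefers (vv 0) 1 3" by (simp add: vv_def prefers_Cons)
  then show ?thesis unfolding GS_manipulation_def wm0 wV using isv forall0 by auto
qed
lemma GS1: "GS_manipulation 4 tb0 3 vv 1 (mm 1)"
proof -
  have "prefers (vv 1) 1 3" by (simp add: vv_def prefers_Cons)
  then show ?thesis unfolding GS_manipulation_def wm1 wV using isv forall1 by auto
qed
lemma GS2: "GS_manipulation 4 tb0 3 vv 2 (mm 2)"
proof -
  have "prefers (vv 2) 4 3" by (simp add: vv_def prefers_Cons)
  then show ?thesis unfolding GS_manipulation_def wm2 wV using isv forall2 by auto
qed

lemma min0:
  assumes "GS_manipulation 4 tb0 3 vv 0 u"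
  shows "2 \<le> card (topk 4 (vv 0) - topk 4 u)"
proof -
  let ?y = "kapp_winner 4 tb0 3 (vv(0 := u))"
  have p: "prefers (vv 0) ?y 3" using assms wV unfolding GS_manipulation_def by simp
  have y: "?y = 1 \<or> ?y = 0" using p by (simp add: vv_def prefers_Cons prefers_Nil)
  have s3: "score 4 3 (vv(0 := u)) 3 \<le> score 4 3 (vv(0 := u)) ?y"
   and s4: "score 4 3 (vv(0 := u)) 4 \<le> score 4 3 (vv(0 := u)) ?y"
    using wmax[of "vv(0 := u)"] by (auto simp: tb0_def)
  have "?y \<noteq> 0"
  proof
    assume "?y = 0"
    with s3 show False by (simp add: score_upd vv_def topk_def split: if_splits)
  qed
  with y have "?y = 1" by simp
  with s3 s4 have "3 \<notin> topk 4 u" "4 \<notin> topk 4 u"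
    by (simp_all add: score_upd vv_def topk_def split: if_splits)
  then have "{3,4} \<subseteq> topk 4 (vv 0) - topk 4 u" by (simp add: vv_def topk_def)
  then have "card {3::nat,4} \<le> card (topk 4 (vv 0) - topk 4 u)"
    by (rule card_mono[rotated]) (simp add: topk_def)
  then show ?thesis by simp
qed

lemma min1:
  assumes "GS_manipulation 4 tb0 3 vv 1 u"
  shows "2 \<le> card (topk 4 (vv 1) - topk 4 u)"
proof -
  let ?y = "kapp_winner 4 tb0 3 (vv(1 := u))"
  have p: "prefers (vv 1) ?y 3" using assms wV unfolding GS_manipulation_def by simp
  have y: "?y = 1" using p by (simp add: vv_def prefers_Cons prefers_Nil)
  have s3: "score 4 3 (vv(1 := u)) 3 \<le> score 4 3 (vv(1 := u)) ?y"
   and s4: "score 4 3 (vv(1 := u)) 4 \<le> score 4 3 (vv(1 := u)) ?y"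
    using wmax[of "vv(1 := u)"] by (auto simp: tb0_def)
  from y s3 s4 have "3 \<notin> topk 4 u" "4 \<notin> topk 4 u"
    by (simp_all add: score_upd vv_def topk_def split: if_splits)
  then have "{3,4} \<subseteq> topk 4 (vv 1) - topk 4 u" by (simp add: vv_def topk_def)
  then have "card {3::nat,4} \<le> card (topk 4 (vv 1) - topk 4 u)"
    by (rule card_mono[rotated]) (simp add: topk_def)
  then show ?thesis by simp
qed

lemma min2:
  assumes "GS_manipulation 4 tb0 3 vv 2 u"
  shows "1 \<le> card (topk 4 (vv 2) - topk 4 u)"
proof (rule ccontr)
  assume "\<not> 1 \<le> card (topk 4 (vv 2) - topk 4 u)"
  moreover have "finite (topk 4 (vv 2) - topk 4 u)" by (simp add: topk_def)
  ultimately have "topk 4 (vv 2) - topk 4 u = {}" by (metis card_0_eq not_less_eq_eq One_nat_def le0 le_zero_eq not_le)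
  then have sub: "topk 4 (vv 2) \<subseteq> topk 4 u" by blast
  have iv: "is_vote (set tb0) u" using assms unfolding GS_manipulation_def by simp
  have "card (topk 4 u) = 4" using vote_topk[OF iv] by simp
  moreover have "card (topk 4 (vv 2)) = 4" by (simp add: vv_def topk_def)
  moreover have "finite (topk 4 u)" by (simp add: topk_def)
  ultimately have "topk 4 u = topk 4 (vv 2)" using sub by (metis card_subset_eq)
  then have "kapp_winner 4 tb0 3 (vv(2 := u)) = kapp_winner 4 tb0 3 vv" by (rule topk_eq_cong)
  then show False using assms wV unfolding GS_manipulation_def by (simp add: vv_def prefers_Cons prefers_Nil)
qed


lemma T2_0: "minimal_type2 4 tb0 3 vv 0 (mm 0)"
proof -
  have l: "card (topk 4 (vv 0) - topk 4 (mm 0)) = 2" by (simp add: topk_def vv_def mm_def)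
  have a: "3 \<in> topk 4 (vv 0)" "1 \<in> topk 4 (vv 0)" by (simp_all add: topk_def vv_def)
  have b: "topk 4 (mm 0) - topk 4 (vv 0) = set (take 2 (drop 4 (vv 0)))"
    by (auto simp: topk_def vv_def mm_def)
  show ?thesis unfolding minimal_type2_def Let_def wm0 wV l using GS0 a b min0 by blast
qed

lemma T2_1: "minimal_type2 4 tb0 3 vv 1 (mm 1)"
proof -
  have l: "card (topk 4 (vv 1) - topk 4 (mm 1)) = 2" by (simp add: topk_def vv_def mm_def)
  have a: "3 \<in> topk 4 (vv 1)" "1 \<in> topk 4 (vv 1)" by (simp_all add: topk_def vv_def)
  have b: "topk 4 (mm 1) - topk 4 (vv 1) = set (take 2 (drop 4 (vv 1)))"
    by (auto simp: topk_def vv_def mm_def)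
  show ?thesis unfolding minimal_type2_def Let_def wm1 wV l using GS1 a b min1 by blast
qed

lemma T2_2: "minimal_type2 4 tb0 3 vv 2 (mm 2)"
proof -
  have l: "card (topk 4 (vv 2) - topk 4 (mm 2)) = 1" by (simp add: topk_def vv_def mm_def)
  have a: "3 \<in> topk 4 (vv 2)" "4 \<in> topk 4 (vv 2)" by (simp_all add: topk_def vv_def)
  have b: "topk 4 (mm 2) - topk 4 (vv 2) = set (take 1 (drop 4 (vv 2)))"
    by (auto simp: topk_def vv_def mm_def)
  show ?thesis unfolding minimal_type2_def Let_def wm2 wV l using GS2 a b min2 by blast
qed

definition kw3 :: "nat list \<Rightarrow> nat list \<Rightarrow> nat list \<Rightarrow> nat" where
  "kw3 a b c = kapp_winner 4 tb0 3 (\<lambda>i. if i = 0 then a else if i = 1 then b else c)"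

lemma kw3_eq: "kapp_winner 4 tb0 3 W = kw3 (W 0) (W 1) (W 2)"
proof -
  have "score 4 3 W = score 4 3 (\<lambda>i. if i = 0 then W 0 else if i = 1 then W 1 else W 2)"
    by (rule ext) (simp add: score_list upt3)
  then show ?thesis unfolding kw3_def kapp_winner_def by simp
qed

lemma kw3_000: "kw3 (vv 0) (vv 1) (vv 2) = 3" by (simp add: kw3_def comp)

lemma kw3_001: "kw3 (vv 0) (vv 1) (mm 2) = 4" by (simp add: kw3_def comp)

lemma kw3_010: "kw3 (vv 0) (mm 1) (vv 2) = 1" by (simp add: kw3_def comp)

lemma kw3_011: "kw3 (vv 0) (mm 1) (mm 2) = 0" by (simp add: kw3_def comp)

lemma kw3_100: "kw3 (mm 0) (vv 1) (vv 2) = 1" by (simp add: kw3_def comp)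

lemma kw3_101: "kw3 (mm 0) (vv 1) (mm 2) = 0" by (simp add: kw3_def comp)

lemma kw3_110: "kw3 (mm 0) (mm 1) (vv 2) = 2" by (simp add: kw3_def comp)

lemma kw3_111: "kw3 (mm 0) (mm 1) (mm 2) = 2" by (simp add: kw3_def comp)
lemmas kw3s = kw3_000 kw3_001 kw3_010 kw3_011 kw3_100 kw3_101 kw3_110 kw3_111

lemma noNE_core:
  assumes h0: "W 0 = vv 0 \<or> W 0 = mm 0" and h1: "W 1 = vv 1 \<or> W 1 = mm 1"
    and h2: "W 2 = vv 2 \<or> W 2 = mm 2"
    and d: "\<forall>i<3. \<forall>a\<in>{vv i, mm i}.
       \<not> prefers (vv i) (kapp_winner 4 tb0 3 (W(i := a))) (kapp_winner 4 tb0 3 W)"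
  shows False
proof -
  have d0: "\<not> prefers (vv 0) (kapp_winner 4 tb0 3 (W(0 := vv 0))) (kapp_winner 4 tb0 3 W)"
           "\<not> prefers (vv 0) (kapp_winner 4 tb0 3 (W(0 := mm 0))) (kapp_winner 4 tb0 3 W)"
       and d1: "\<not> prefers (vv 1) (kapp_winner 4 tb0 3 (W(1 := vv 1))) (kapp_winner 4 tb0 3 W)"
           "\<not> prefers (vv 1) (kapp_winner 4 tb0 3 (W(1 := mm 1))) (kapp_winner 4 tb0 3 W)"
       and d2: "\<not> prefers (vv 2) (kapp_winner 4 tb0 3 (W(2 := vv 2))) (kapp_winner 4 tb0 3 W)"
           "\<not> prefers (vv 2) (kapp_winner 4 tb0 3 (W(2 := mm 2))) (kapp_winner 4 tb0 3 W)"
    using d by auto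
  have e0: "\<not> prefers (vv 0) (kw3 (vv 0) (W 1) (W 2)) (kw3 (W 0) (W 1) (W 2))"
          "\<not> prefers (vv 0) (kw3 (mm 0) (W 1) (W 2)) (kw3 (W 0) (W 1) (W 2))"
    using d0 unfolding kw3_eq by simp_all
  have e1: "\<not> prefers (vv 1) (kw3 (W 0) (vv 1) (W 2)) (kw3 (W 0) (W 1) (W 2))"
          "\<not> prefers (vv 1) (kw3 (W 0) (mm 1) (W 2)) (kw3 (W 0) (W 1) (W 2))"
    using d1 unfolding kw3_eq by simp_all
  have e2: "\<not> prefers (vv 2) (kw3 (W 0) (W 1) (vv 2)) (kw3 (W 0) (W 1) (W 2))"
          "\<not> prefers (vv 2) (kw3 (W 0) (W 1) (mm 2)) (kw3 (W 0) (W 1) (W 2))"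
    using d2 unfolding kw3_eq by simp_all
  have pr: "\<And>a b. prefers (vv 0) a b \<longleftrightarrow> prefers [1,0,3,4,2,5,6] a b"
           "\<And>a b. prefers (vv 1) a b \<longleftrightarrow> prefers [1,3,5,4,2,6,0] a b"
           "\<And>a b. prefers (vv 2) a b \<longleftrightarrow> prefers [2,4,3,6,0,1,5] a b"
    by (simp_all add: vv_def)
  from h0 h1 h2 e0 e1 e2 show False
    by (elim disjE) (simp_all only: kw3s pr, simp_all add: prefers_Cons prefers_Nil)
qed

theorem mainTheorem4:
  shows "\<exists>(C :: nat set) (tb :: nat list) (n :: nat) (V :: nat \<Rightarrow> nat list) (m :: nat \<Rightarrow> nat list).
     finite C \<and> is_vote C tb \<and> (\<forall>i<n. is_vote C (V i)) \<and>
     (\<forall>i<n. GS_manipulator 4 tb n V i \<longrightarrow> minimal_GS_manipulation 4 tb n V i (m i)) \<and>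
     (\<forall>W. \<not> pure_NE 4 tb n V m W)"
proof -
  have lt3: "\<And>P. (\<forall>i<(3::nat). P i) \<longleftrightarrow> P 0 \<and> P 1 \<and> P 2"
    by (auto simp: less_Suc_eq numeral_3_eq_3 numeral_2_eq_2)
  have gs: "GS_manipulator 4 tb0 3 vv 0" "GS_manipulator 4 tb0 3 vv 1" "GS_manipulator 4 tb0 3 vv 2"
    unfolding GS_manipulator_def using GS0 GS1 GS2 by blast+
  have c1: "finite (set tb0)" by simp
  have c2: "is_vote (set tb0) tb0" by (rule isv)
  have c3: "\<forall>i<3. is_vote (set tb0) (vv i)" using isv by blast
  have c4: "\<forall>i<3. GS_manipulator 4 tb0 3 vv i \<longrightarrow> minimal_GS_manipulation 4 tb0 3 vv i (mm i)"
    unfolding lt3 minimal_GS_manipulation_def using T2_0 T2_1 T2_2 by blast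
  have c5: "\<not> pure_NE 4 tb0 3 vv mm W" for W
  proof
    assume ne: "pure_NE 4 tb0 3 vv mm W"
    then have gp: "game_profile 4 tb0 3 vv mm W" by (simp add: pure_NE_def)
    have h: "W 0 = vv 0 \<or> W 0 = mm 0" "W 1 = vv 1 \<or> W 1 = mm 1" "W 2 = vv 2 \<or> W 2 = mm 2"
      using gp gs unfolding game_profile_def lt3 by auto
    have d: "\<forall>i<3. \<forall>a\<in>{vv i, mm i}.
       \<not> prefers (vv i) (kapp_winner 4 tb0 3 (W(i := a))) (kapp_winner 4 tb0 3 W)"
      using ne gs unfolding pure_NE_def lt3 by auto
    show False using noNE_core[OF h d] .
  qed
  show ?thesis
    apply (rule exI[of _ "set tb0"], rule exI[of _ tb0], rule exI[of _ 3], rule exI[of _ vv], rule exI[of _ mm])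
    using c1 c2 c3 c4 c5 by blast
qed

end
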